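(* Let $q$ be a prime power, $m,\ell\ge1$, fix a monomial order on $\mathcal{L}_q(x,q^m)^\ell$, and let $B$ be a basis of a left submodule $M\subseteq\mathcal{L}_q(x,q^m)^\ell$. Then $B$ is a minimal basis if and only if the leading positions of the elements of $B$ are pairwise distinct.
   Context: Write $[i]:=q^i$. $\mathcal{L}_q(x,q^m)$ is the ring of $q$-linearized polynomials $\sum_i a_ix^{[i]}$ ($a_i\in\mathbb{F}_{q^m}$) under addition and composition $\circ$. $\mathcal{L}_q(x,q^m)^\ell$ is a left module via $h\circ[f_1\cdots f_\ell]=[h\circ f_1\cdots h\circ f_\ell]$; a left submodule is a subset closed under addition and under this left composition. Monomials are $x^{[k]}e_i$ ($x^{[k]}$ in coordinate $i$, $e_i$ the $i$-th unit vector). A monomial order is a total order $<$ on monomials such that $x^{[k]}e_i<x^{[j]}\circ(x^{[k]}e_i)=x^{[j+k]}e_i$ for all $j>0$, and $x^{[k]}e_i<x^{[k']}e_{i'}$ implies $x^{[j]}\circ(x^{[k]}e_i)<x^{[j]}\circ(x^{[k']}e_{i'})$ for all $j\ge0$. For nonzero $f$, $\mathrm{lm}(f)$ is the greatest monomial occurring in $f$ (with nonzero coefficient), $\mathrm{lt}(f)$ is that term with its coefficient, and $\mathrm{lpos}(f)$ is the coordinate of $\mathrm{lm}(f)$. Elements $f^{(1)},\dots,f^{(s)}$ are linearly independent if $\sum a_i\circ f^{(i)}=0$ with $a_i\in\mathcal{L}_q(x,q^m)$ implies all $a_i=0$; a basis of $M$ is a generating set of linearly independent elements. For nonzero $f^{(1)},\dots,f^{(s)}$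 and $F=\{f^{(1)},\dots,f^{(s)}\}$, $f$ reduces to $h$ modulo $F$ in one step if $h=f-\sum_{i}(b_ix^{[a_i]})\circ f^{(i)}$ (sum over some of the $f^{(i)}$) with $b_i\in\mathbb{F}_{q^m}$, $a_i\ge0$, $\mathrm{lm}(f)=x^{[a_i]}\circ\mathrm{lm}(f^{(i)})$ for each such $i$, and $\mathrm{lt}(f)=\sum_i(b_ix^{[a_i]})\circ\mathrm{lt}(f^{(i)})$; $f$ is minimal w.r.t. $F$ if it cannot be reduced modulo $F$. A basis $B$ is minimal if every $b\in B$ is minimal with respect to $B\setminus\{b\}$. *)

theory Defs
  imports "HOL-Computational_Algebra.Primes"
begin

text \<open>q-linearized polynomials over a finite field 'a (intended: F_{q^m}).
  A linearized polynomial sum_i a_i x^[i] is represented by its coefficient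
  function nat => 'a with finite support.  An element of L^l is a function
  v :: nat => nat => 'a, where v i k is the coefficient of x^[k] in coordinate i;
  coordinates are 0..l-1 (coordinates i >= l are zero).  Monomials x^[k] e_i are
  encoded as pairs (k, i) with i < l.\<close>

definition Lpoly :: "(nat \<Rightarrow> 'a::zero) set" where
  "Lpoly = {f. finite {k. f k \<noteq> 0}}"

text \<open>Composition: (a x^[i]) o (b x^[j]) = a b^(q^i) x^[i+j].\<close>
definition lcomp :: "nat \<Rightarrow> (nat \<Rightarrow> 'a::field) \<Rightarrow> (nat \<Rightarrow> 'a) \<Rightarrow> (nat \<Rightarrow> 'a)" where
  "lcomp q f g = (\<lambda>k. \<Sum>i\<le>k. f i * (g (k - i)) ^ (q ^ i))"

definition lterm :: "'a::zero \<Rightarrow> nat \<Rightarrow> (nat \<Rightarrow> 'a)" where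
  "lterm b a = (\<lambda>k. if k = a then b else 0)"

definition Lvec :: "nat \<Rightarrow> (nat \<Rightarrow> nat \<Rightarrow> 'a::zero) set" where
  "Lvec l = {v. (\<forall>i\<ge>l. \<forall>k. v i k = 0) \<and> (\<forall>i. finite {k. v i k \<noteq> 0})}"

definition vzero :: "nat \<Rightarrow> nat \<Rightarrow> 'a::zero" where
  "vzero = (\<lambda>i k. 0)"

definition vadd :: "(nat \<Rightarrow> nat \<Rightarrow> 'a::plus) \<Rightarrow> (nat \<Rightarrow> nat \<Rightarrow> 'a) \<Rightarrow> (nat \<Rightarrow> nat \<Rightarrow> 'a)" where
  "vadd u v = (\<lambda>i k. u i k + v i k)"

definition vcomp :: "nat \<Rightarrow> (nat \<Rightarrow> 'a::field) \<Rightarrow> (nat \<Rightarrow> nat \<Rightarrow> 'a) \<Rightarrow> (nat \<Rightarrow> nat \<Rightarrow> 'a)" where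
  "vcomp q h v = (\<lambda>i. lcomp q h (v i))"

definition lincomb :: "nat \<Rightarrow> (nat \<Rightarrow> nat \<Rightarrow> 'a::field) set \<Rightarrow> ((nat \<Rightarrow> nat \<Rightarrow> 'a) \<Rightarrow> (nat \<Rightarrow> 'a))
    \<Rightarrow> (nat \<Rightarrow> nat \<Rightarrow> 'a)" where
  "lincomb q S a = (\<lambda>i k. \<Sum>b\<in>S. vcomp q (a b) b i k)"

definition left_submodule :: "nat \<Rightarrow> nat \<Rightarrow> (nat \<Rightarrow> nat \<Rightarrow> 'a::field) set \<Rightarrow> bool" where
  "left_submodule q l M \<longleftrightarrow> M \<subseteq> Lvec l \<and>
     (\<forall>u\<in>M. \<forall>v\<in>M. vadd u v \<in> M) \<and>
     (\<forall>h\<in>Lpoly. \<forall>v\<in>M. vcomp q h v \<in> M)"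

definition lspan :: "nat \<Rightarrow> (nat \<Rightarrow> nat \<Rightarrow> 'a::field) set \<Rightarrow> (nat \<Rightarrow> nat \<Rightarrow> 'a) set" where
  "lspan q B = {lincomb q S a | S a. finite S \<and> S \<subseteq> B \<and> (\<forall>b\<in>S. a b \<in> Lpoly)}"

definition lin_indep :: "nat \<Rightarrow> (nat \<Rightarrow> nat \<Rightarrow> 'a::field) set \<Rightarrow> bool" where
  "lin_indep q B \<longleftrightarrow> (\<forall>S a. finite S \<and> S \<subseteq> B \<and> (\<forall>b\<in>S. a b \<in> Lpoly) \<and> lincomb q S a = vzero
      \<longrightarrow> (\<forall>b\<in>S. a b = (\<lambda>k. 0)))"

definition is_basis :: "nat \<Rightarrow> (nat \<Rightarrow> nat \<Rightarrow> 'a::field) set \<Rightarrow> (nat \<Rightarrow> nat \<Rightarrow> 'a) set \<Rightarrow> bool" where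
  "is_basis q B M \<longleftrightarrow> lspan q B = M \<and> lin_indep q B"

definition Mon :: "nat \<Rightarrow> (nat \<times> nat) set" where
  "Mon l = {(k, i). i < l}"

definition monomial_order :: "nat \<Rightarrow> (nat \<times> nat \<Rightarrow> nat \<times> nat \<Rightarrow> bool) \<Rightarrow> bool" where
  "monomial_order l mless \<longleftrightarrow>
     (\<forall>s\<in>Mon l. \<not> mless s s) \<and>
     (\<forall>s\<in>Mon l. \<forall>t\<in>Mon l. \<forall>u\<in>Mon l. mless s t \<and> mless t u \<longrightarrow> mless s u) \<and>
     (\<forall>s\<in>Mon l. \<forall>t\<in>Mon l. s = t \<or> mless s t \<or> mless t s) \<and>
     (\<forall>k i j. i < l \<and> j > 0 \<longrightarrow> mless (k, i) (j + k, i)) \<and>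
     (\<forall>k i k' i' j. i < l \<and> i' < l \<and> mless (k, i) (k', i') \<longrightarrow> mless (j + k, i) (j + k', i'))"

definition vsupp :: "nat \<Rightarrow> (nat \<Rightarrow> nat \<Rightarrow> 'a::zero) \<Rightarrow> (nat \<times> nat) set" where
  "vsupp l v = {(k, i). i < l \<and> v i k \<noteq> 0}"

definition lm :: "(nat \<times> nat \<Rightarrow> nat \<times> nat \<Rightarrow> bool) \<Rightarrow> nat \<Rightarrow> (nat \<Rightarrow> nat \<Rightarrow> 'a::zero) \<Rightarrow> nat \<times> nat" where
  "lm mless l v = (THE t. t \<in> vsupp l v \<and> (\<forall>s\<in>vsupp l v. s \<noteq> t \<longrightarrow> mless s t))"

definition lt :: "(nat \<times> nat \<Rightarrow> nat \<times> nat \<Rightarrow> bool) \<Rightarrow> nat \<Rightarrow> (nat \<Rightarrow> nat \<Rightarrow> 'a::zero) \<Rightarrow> (nat \<Rightarrow> nat \<Rightarrow> 'a)" where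
  "lt mless l v = (\<lambda>i k. if (k, i) = lm mless l v then v i k else 0)"

definition lpos :: "(nat \<times> nat \<Rightarrow> nat \<times> nat \<Rightarrow> bool) \<Rightarrow> nat \<Rightarrow> (nat \<Rightarrow> nat \<Rightarrow> 'a::zero) \<Rightarrow> nat" where
  "lpos mless l v = snd (lm mless l v)"

text \<open>f reduces (in one step) modulo F: there are some elements g of F, b_g, a_g with
  lm f = x^[a_g] o lm g and lt f = sum_g (b_g x^[a_g]) o lt g.  (The reduct h is then
  determined by f.)\<close>
definition reducible :: "nat \<Rightarrow> (nat \<times> nat \<Rightarrow> nat \<times> nat \<Rightarrow> bool) \<Rightarrow> nat \<Rightarrow> (nat \<Rightarrow> nat \<Rightarrow> 'a::field)
    \<Rightarrow> (nat \<Rightarrow> nat \<Rightarrow> 'a) set \<Rightarrow> bool" where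
  "reducible q mless l f F \<longleftrightarrow> f \<noteq> vzero \<and>
     (\<exists>S b a. finite S \<and> S \<subseteq> F \<and>
        (\<forall>g\<in>S. lm mless l f = (a g + fst (lm mless l g), snd (lm mless l g))) \<and>
        lt mless l f = (\<lambda>i k. \<Sum>g\<in>S. vcomp q (lterm (b g) (a g)) (lt mless l g) i k))"

definition minimal_wrt where
  "minimal_wrt q mless l f F \<longleftrightarrow> \<not> reducible q mless l f F"

definition minimal_basis :: "nat \<Rightarrow> (nat \<times> nat \<Rightarrow> nat \<times> nat \<Rightarrow> bool) \<Rightarrow> nat \<Rightarrow> (nat \<Rightarrow> nat \<Rightarrow> 'a::field) set
    \<Rightarrow> (nat \<Rightarrow> nat \<Rightarrow> 'a) set \<Rightarrow> bool" where
  "minimal_basis q mless l B M \<longleftrightarrow> is_basis q B M \<and> (\<forall>b\<in>B. minimal_wrt q mless l b (B - {b}))"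
  
end

theory Submission
  imports Defs
begin

lemma max_exists:
  assumes mo: "monomial_order l mless" and fin: "finite A" and ne: "A \<noteq> {}" and sub: "A \<subseteq> Mon l"
  shows "\<exists>t\<in>A. \<forall>s\<in>A. s \<noteq> t \<longrightarrow> mless s t"
  using fin ne sub
proof (induction A rule: finite_ne_induct)
  case (singleton x) then show ?case by auto
next
  case (insert x F)
  then obtain t where t: "t \<in> F" "\<forall>s\<in>F. s \<noteq> t \<longrightarrow> mless s t" by auto
  have xM: "x \<in> Mon l" and tM: "t \<in> Mon l" using insert t by auto
  have FM: "F \<subseteq> Mon l" using insert by auto
  note mo' = mo[unfolded monomial_order_def]
  have irr: "\<forall>s\<in>Mon l. \<not> mless s s" using mo' by (elim conjE) assumption
  have tr: "\<forall>s\<in>Mon l. \<forall>t\<in>Mon l. \<forall>u\<in>Mon l. mless s t \<and> mless t u \<longrightarrow> mless s u"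
    using mo' by (elim conjE) assumption
  have tot: "\<forall>s\<in>Mon l. \<forall>t\<in>Mon l. s = t \<or> mless s t \<or> mless t s"
    using mo' by (elim conjE) assumption
  show ?case
  proof (cases "mless x t")
    case True then show ?thesis using t by auto
  next
    case False
    then have xt: "x = t \<or> mless t x" using tot xM tM by blast
    have "\<forall>s\<in>insert x F. s \<noteq> x \<longrightarrow> mless s x"
    proof
      fix s assume s: "s \<in> insert x F"
      show "s \<noteq> x \<longrightarrow> mless s x"
      proof
        assume "s \<noteq> x"
        then have sF: "s \<in> F" using s by auto
        then have sM: "s \<in> Mon l" using FM by auto
        show "mless s x"
        proof (cases "s = t")
          case True then show ?thesis using xt \<open>s \<noteq> x\<close> by auto
        next
          case False
          then have "mless s t" using t sF by auto
          then show ?thesis using xt tr sM tM xM by blast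
        qed
      qed
    qed
    then show ?thesis by auto
  qed
qed

lemma lm_in_supp:
  assumes mo: "monomial_order l mless" and v: "v \<in> Lvec l" and nz: "v \<noteq> vzero"
  shows "lm mless l v \<in> vsupp l v"
proof -
  have sub: "vsupp l v \<subseteq> Mon l" unfolding vsupp_def Mon_def by auto
  have vz: "\<And>i k. l \<le> i \<Longrightarrow> v i k = 0" and vf: "\<And>i. finite {k. v i k \<noteq> 0}"
    using v unfolding Lvec_def by auto
  have "vsupp l v \<subseteq> (\<Union>i<l. {k. v i k \<noteq> 0}) \<times> {..<l}" unfolding vsupp_def by auto
  moreover have "finite ((\<Union>i<l. {k. v i k \<noteq> 0}) \<times> {..<l})"
    using vf by simp
  ultimately have fin: "finite (vsupp l v)" by (rule finite_subset)
  have "\<exists>i k. v i k \<noteq> 0"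
  proof (rule ccontr)
    assume "\<not> (\<exists>i k. v i k \<noteq> 0)"
    then have "v = vzero" unfolding vzero_def by (intro ext) simp
    then show False using nz by simp
  qed
  then obtain i k where ik: "v i k \<noteq> 0" by blast
  have "i < l"
  proof (rule ccontr)
    assume "\<not> i < l"
    then have "v i k = 0" using vz by simp
    then show False using ik by simp
  qed
  then have "(k, i) \<in> vsupp l v" using ik unfolding vsupp_def by simp
  then have ne: "vsupp l v \<noteq> {}" by blast
  obtain t where t: "t \<in> vsupp l v" "\<forall>s\<in>vsupp l v. s \<noteq> t \<longrightarrow> mless s t"
    using max_exists[OF mo fin ne sub] by auto
  note mo' = mo[unfolded monomial_order_def]
  have irr: "\<forall>s\<in>Mon l. \<not> mless s s" using mo' by (elim conjE) assumption
  have tr: "\<forall>s\<in>Mon l. \<forall>t\<in>Mon l. \<forall>u\<in>Mon l. mless s t \<and> mless t u \<longrightarrow> mless s u"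
    using mo' by (elim conjE) assumption
  have uniq: "\<And>t'. t' \<in> vsupp l v \<and> (\<forall>s\<in>vsupp l v. s \<noteq> t' \<longrightarrow> mless s t') \<Longrightarrow> t' = t"
  proof (rule ccontr)
    fix t' assume a: "t' \<in> vsupp l v \<and> (\<forall>s\<in>vsupp l v. s \<noteq> t' \<longrightarrow> mless s t')" and ne: "t' \<noteq> t"
    then have "mless t t'" "mless t' t" using t by auto
    have "t \<in> Mon l" "t' \<in> Mon l" using sub t a by auto
    then have "mless t t" using tr \<open>mless t t'\<close> \<open>mless t' t\<close> by blast
    then show False using irr \<open>t \<in> Mon l\<close> by blast
  qed
  have "lm mless l v = t" unfolding lm_def
  proof (rule the_equality)
    show "t \<in> vsupp l v \<and> (\<forall>s\<in>vsupp l v. s \<noteq> t \<longrightarrow> mless s t)" using t by blast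
  next
    fix t' assume "t' \<in> vsupp l v \<and> (\<forall>s\<in>vsupp l v. s \<noteq> t' \<longrightarrow> mless s t')"
    then show "t' = t" by (rule uniq)
  qed
  then show ?thesis using t by auto
qed

lemma lcomp_lterm:
  "lcomp q (lterm c a) g k = (if a \<le> k then c * g (k - a) ^ (q ^ a) else 0)"
proof -
  have "lcomp q (lterm c a) g k = (\<Sum>i\<le>k. if i = a then c * g (k - i) ^ (q ^ i) else 0)"
    unfolding lcomp_def lterm_def by (intro sum.cong) auto
  also have "\<dots> = (if a \<le> k then c * g (k - a) ^ (q ^ a) else 0)"
    by (subst sum.delta) auto
  finally show ?thesis .
qed

lemma lcomp_id: "lcomp q (lterm 1 0) g = g"
  by (rule ext) (simp add: lcomp_lterm)

lemma basis_facts: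
  assumes "left_submodule q l M" "is_basis q B M" "b \<in> B"
  shows "b \<in> Lvec l" "b \<noteq> vzero"
proof -
  have "lincomb q {b} (\<lambda>_. lterm 1 0) = b"
    unfolding lincomb_def vcomp_def by (simp add: lcomp_id)
  moreover have "lterm (1::'a) 0 \<in> Lpoly" unfolding Lpoly_def lterm_def by auto
  ultimately have "b \<in> lspan q B" unfolding lspan_def using assms(3)
    by (smt (verit) empty_subsetI finite.emptyI finite_insert insert_subset mem_Collect_eq singletonD)
  then show "b \<in> Lvec l" using assms unfolding is_basis_def left_submodule_def by auto
  show "b \<noteq> vzero"
  proof
    assume "b = vzero"
    then have "lincomb q {b} (\<lambda>_. lterm 1 0) = vzero"
      unfolding lincomb_def vcomp_def by (simp add: lcomp_id)
    then have "lterm (1::'a) 0 = (\<lambda>k. 0)"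
      using assms(2,3) \<open>lterm 1 0 \<in> Lpoly\<close> unfolding is_basis_def lin_indep_def
      by (metis (no_types, lifting) empty_subsetI finite.emptyI finite.insertI insert_subset singletonD singletonI)
    then show False unfolding lterm_def by (metis one_neq_zero)
  qed
qed

lemma reduce_one:
  fixes b b' :: "nat \<Rightarrow> nat \<Rightarrow> 'a::field"
  assumes q: "q > 0" and mo: "monomial_order l mless"
    and b: "b \<in> Lvec l" "b \<noteq> vzero" and b': "b' \<in> Lvec l" "b' \<noteq> vzero"
    and F: "b' \<in> F" and pos: "lpos mless l b = lpos mless l b'"
    and le: "fst (lm mless l b') \<le> fst (lm mless l b)"
  shows "reducible q mless l b F"
proof -
  obtain k i where lb: "lm mless l b = (k, i)" by (cases "lm mless l b") auto
  obtain k' where lb': "lm mless l b' = (k', i)" using pos lb unfolding lpos_def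
    by (cases "lm mless l b'") auto
  have kk: "k' \<le> k" using le lb lb' by auto
  have nzb: "b i k \<noteq> 0" using lm_in_supp[OF mo b] lb unfolding vsupp_def by auto
  have nzb': "b' i k' \<noteq> 0" using lm_in_supp[OF mo b'] lb' unfolding vsupp_def by auto
  define a where "a = k - k'"
  define c where "c = b i k / (b' i k') ^ (q ^ a)"
  have cc: "c * (b' i k') ^ (q ^ a) = b i k" unfolding c_def using nzb' by simp
  have qa: "q ^ a > 0" using q by simp
  have eq: "lt mless l b = (\<lambda>i0 k0. \<Sum>g\<in>{b'}. vcomp q (lterm ((\<lambda>_. c) g) ((\<lambda>_. a) g)) (lt mless l g) i0 k0)"
  proof (intro ext)
    fix i0 k0
    show "lt mless l b i0 k0 = (\<Sum>g\<in>{b'}. vcomp q (lterm ((\<lambda>_. c) g) ((\<lambda>_. a) g)) (lt mless l g) i0 k0)"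
    proof (cases "i0 = i \<and> k0 = k")
      case True
      then show ?thesis using cc kk unfolding a_def
        by (simp add: vcomp_def lcomp_lterm lt_def lb lb')
    next
      case False
      have L: "lt mless l b i0 k0 = 0" using False by (auto simp: lt_def lb)
      have R0: "a \<le> k0 \<Longrightarrow> lt mless l b' i0 (k0 - a) = 0"
        using False kk unfolding a_def by (auto simp: lt_def lb')
      have R: "vcomp q (lterm c a) (lt mless l b') i0 k0 = 0"
        unfolding vcomp_def lcomp_lterm using R0 qa by (simp add: zero_power)
      show ?thesis using L R by simp
    qed
  qed
  have lmeq: "\<forall>g\<in>{b'}. lm mless l b = ((\<lambda>_. a) g + fst (lm mless l g), snd (lm mless l g))"
    using lb lb' kk unfolding a_def by simp
  have ex: "\<exists>S bf af. finite S \<and> S \<subseteq> F \<and>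
        (\<forall>g\<in>S. lm mless l b = (af g + fst (lm mless l g), snd (lm mless l g))) \<and>
        lt mless l b = (\<lambda>i k. \<Sum>g\<in>S. vcomp q (lterm (bf g) (af g)) (lt mless l g) i k)"
    apply (rule exI[of _ "{b'}"], rule exI[of _ "\<lambda>_. c"], rule exI[of _ "\<lambda>_. a"])
    apply (intro conjI)
       apply simp
      apply (simp add: F)
     apply (rule lmeq)
    apply (rule eq)
    done
  show ?thesis unfolding reducible_def using b(2) ex by (rule conjI)
qed

theorem proposition17:
  fixes q m l :: nat
    and mless :: "nat \<times> nat \<Rightarrow> nat \<times> nat \<Rightarrow> bool"
    and M B :: "(nat \<Rightarrow> nat \<Rightarrow> 'a::{field,finite}) set"
  assumes "\<exists>p e. prime p \<and> e \<ge> 1 \<and> q = p ^ e"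
    and "m \<ge> 1" and "l \<ge> 1"
    and "card (UNIV :: 'a set) = q ^ m"
    and "monomial_order l mless"
    and "left_submodule q l M"
    and "is_basis q B M"
  shows "minimal_basis q mless l B M \<longleftrightarrow>
         (\<forall>b\<in>B. \<forall>b'\<in>B. b \<noteq> b' \<longrightarrow> lpos mless l b \<noteq> lpos mless l b')"
proof
  have q: "q > 0" using assms(1) by (auto simp: prime_gt_0_nat)
  assume mb: "minimal_basis q mless l B M"
  show "\<forall>b\<in>B. \<forall>b'\<in>B. b \<noteq> b' \<longrightarrow> lpos mless l b \<noteq> lpos mless l b'"
  proof (intro ballI impI notI)
    fix b b' assume bB: "b \<in> B" and b'B: "b' \<in> B" and ne: "b \<noteq> b'"
      and p: "lpos mless l b = lpos mless l b'"
    note fb = basis_facts[OF assms(6,7) bB] and fb' = basis_facts[OF assms(6,7) b'B]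
    show False
    proof (cases "fst (lm mless l b') \<le> fst (lm mless l b)")
      case True
      have "reducible q mless l b (B - {b})"
        using reduce_one[OF q assms(5) fb fb' _ p True] b'B ne by auto
      then show False using mb bB unfolding minimal_basis_def minimal_wrt_def by auto
    next
      case False
      have "reducible q mless l b' (B - {b'})"
        using reduce_one[OF q assms(5) fb' fb _ p[symmetric]] False bB ne by auto
      then show False using mb b'B unfolding minimal_basis_def minimal_wrt_def by auto
    qed
  qed
next
  assume d: "\<forall>b\<in>B. \<forall>b'\<in>B. b \<noteq> b' \<longrightarrow> lpos mless l b \<noteq> lpos mless l b'"
  have "\<forall>b\<in>B. minimal_wrt q mless l b (B - {b})"
  proof (intro ballI)
    fix b assume bB: "b \<in> B"
    note fb = basis_facts[OF assms(6,7) bB]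
    show "minimal_wrt q mless l b (B - {b})" unfolding minimal_wrt_def reducible_def
    proof (rule notI, elim conjE exE)
      fix S bf af
      assume S: "finite S" "S \<subseteq> B - {b}"
        and lmS: "\<forall>g\<in>S. lm mless l b = (af g + fst (lm mless l g), snd (lm mless l g))"
        and ltS: "lt mless l b = (\<lambda>i k. \<Sum>g\<in>S. vcomp q (lterm (bf g) (af g)) (lt mless l g) i k)"
      show False
      proof (cases "S = {}")
        case True
        obtain k i where lb: "lm mless l b = (k, i)" by (cases "lm mless l b") auto
        have nzb: "b i k \<noteq> 0" using lm_in_supp[OF assms(5) fb] lb unfolding vsupp_def by auto
        have "lt mless l b i k = 0" using ltS True by simp
        then show False using nzb lb unfolding lt_def by simp
      next
        case False
        then obtain g where g: "g \<in> S" by auto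
        then have "lpos mless l b = lpos mless l g" using lmS unfolding lpos_def by auto
        moreover have "g \<in> B" "g \<noteq> b" using g S by auto
        ultimately show False using d bB by metis
      qed
    qed
  qed
  then show "minimal_basis q mless l B M" using assms(7) unfolding minimal_basis_def by auto
qed

end
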